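(* Let $n\ge2$ be an integer that is not a perfect square, and let $a,b$ be positive rational numbers with $a^2-nb^2=-1$. Put $u=a+b\sqrt n$ and for $k\ge1$ write $u^k=a_k+b_k\sqrt n$ with $a_k,b_k\in\mathbb Q$. Then $$\mathcal L\left(\frac1{u^2}\right)=\sum_{k=1}^{\infty}\left[\mathcal L\left(\frac{1}{n(b_{2k}/a)^2}\right)+\mathcal L\left(\frac{1}{(a_{2k+1}/a)^2}\right)\right].$$ Moreover, if $a,b\in\mathbb Z$ then $b_{2k}/a\in\mathbb Z$ and $a_{2k+1}/a\in\mathbb Z$ for all $k\ge1$.
   Context: $\mathcal L$ is the Rogers dilogarithm: for real $z\le1$, $\mathcal L(z)=\mathrm{Li}_2(z)+\tfrac12\log|z|\log(1-z)$, where $\mathrm{Li}_2(z)=\sum_{m\ge1}z^m/m^2$. *)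

theory Defs
  imports "HOL-Analysis.Analysis"
begin

text \<open>Dilogarithm by its power series (convergent for |z| \<le> 1, which covers
all arguments occurring in the statement).\<close>
definition Li2 :: "real \<Rightarrow> real" where
  "Li2 z = (\<Sum>m. z ^ (Suc m) / (real (Suc m))^2)"

definition rogers_L :: "real \<Rightarrow> real" where
  "rogers_L z = Li2 z + 1/2 * ln \<bar>z\<bar> * ln (1 - z)"

end

theory Submission
  imports Defs "HOL-Real_Asymp.Real_Asymp"
begin

lemma li2_summable:
  fixes z :: real assumes "\<bar>z\<bar> < 1"
  shows "summable (\<lambda>n. (1 / (real n)^2) * z^n)"
proof (rule summable_comparison_test[where g="\<lambda>n. \<bar>z\<bar>^n"])
  show "summable (\<lambda>n. \<bar>z\<bar>^n)" using assms by (intro summable_geometric) simp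
  show "\<exists>N. \<forall>n\<ge>N. norm (1 / (real n)^2 * z^n) \<le> \<bar>z\<bar>^n"
  proof (intro exI allI impI)
    fix n :: nat
    have "1 / (real n)^2 \<le> 1"
    proof (cases n)
      case 0 then show ?thesis by simp
    next
      case (Suc m) then have "1 \<le> (real n)^2" by simp
      then show ?thesis by (simp add: divide_le_eq)
    qed
    then have "1 / (real n)^2 * \<bar>z\<bar>^n \<le> 1 * \<bar>z\<bar>^n"
      by (intro mult_right_mono) auto
    then show "norm (1 / (real n)^2 * z^n) \<le> \<bar>z\<bar>^n"
      by (simp add: abs_mult power_abs)
  qed
qed

lemma li2_eq:
  fixes z :: real assumes "\<bar>z\<bar> < 1"
  shows "Li2 z = (\<Sum>n. (1 / (real n)^2) * z^n)"
proof -
  have "(\<lambda>n. (1 / (real n)^2) * z^n) sums (\<Sum>n. (1 / (real n)^2) * z^n)"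
    using li2_summable[OF assms] by (rule summable_sums)
  then have "(\<lambda>m. (1 / (real (Suc m))^2) * z^(Suc m)) sums (\<Sum>n. (1 / (real n)^2) * z^n)"
    by (subst sums_Suc_iff) simp
  then show ?thesis unfolding Li2_def by (simp add: sums_iff)
qed

lemma li2_0: "Li2 0 = 0"
  unfolding Li2_def by simp

lemma li2_deriv_series:
  fixes z :: real assumes "\<bar>z\<bar> < 1"
  shows "(Li2 has_real_derivative (\<Sum>n. diffs (\<lambda>n. 1 / (real n)^2) n * z^n)) (at z)"
proof (rule has_field_derivative_transform_within_open[where S="{-1<..<1}"])
  show "((\<lambda>z. \<Sum>n. (1 / (real n)^2) * z^n) has_real_derivative
      (\<Sum>n. diffs (\<lambda>n. 1 / (real n)^2) n * z^n)) (at z)"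
    by (rule termdiffs_strong'[where K=1]) (use assms li2_summable in auto)
  show "\<And>x. x \<in> {-1<..<1} \<Longrightarrow> (\<Sum>n. 1 / (real n)\<^sup>2 * x ^ n) = Li2 x"
    using li2_eq by (auto simp: abs_less_iff)
qed (use assms in auto)

lemma li2_deriv_val:
  fixes z :: real assumes "0 < z" "z < 1"
  shows "(\<Sum>n. diffs (\<lambda>n. 1 / (real n)^2) n * z^n) = - ln (1 - z) / z"
proof -
  have d: "diffs (\<lambda>n. 1 / (real n)^2) n = 1 / real (Suc n)" for n
    unfolding diffs_def by (simp add: power2_eq_square)
  have "(\<lambda>n. - ((-(-z))^n) / of_nat n) sums ln (1 + (-z))"
    using assms by (intro ln_series') auto
  then have "(\<lambda>n. z^n / real n) sums (- ln (1 - z))"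
    using sums_minus by fastforce
  then have "(\<lambda>n. z^(Suc n) / real (Suc n)) sums (- ln (1 - z))"
    by (subst sums_Suc_iff) simp
  then have "(\<lambda>n. z^(Suc n) / real (Suc n) / z) sums (- ln (1 - z) / z)"
    by (rule sums_divide)
  moreover have "(\<lambda>n. z^(Suc n) / real (Suc n) / z) = (\<lambda>n. diffs (\<lambda>n. 1 / (real n)^2) n * z^n)"
  proof
    fix n
    have "z^(Suc n) / real (Suc n) / z = (z / z) * (z^n / real (Suc n))" by simp
    also have "\<dots> = diffs (\<lambda>n. 1 / (real n)^2) n * z^n" using assms by (simp add: d)
    finally show "z^(Suc n) / real (Suc n) / z = diffs (\<lambda>n. 1 / (real n)^2) n * z^n" .
  qed
  ultimately show ?thesis by (simp add: sums_iff)
qed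

definition Ld :: "real \<Rightarrow> real" where
  "Ld t = - (ln (1 - t) / t + ln t / (1 - t)) / 2"

lemma L_deriv:
  assumes "0 < t" "t < 1"
  shows "(rogers_L has_real_derivative Ld t) (at t)"
proof (rule has_field_derivative_transform_within_open[where S="{0<..<1}"])
  have "((\<lambda>t. Li2 t + 1/2 * ln t * ln (1 - t)) has_real_derivative
     (- ln (1 - t) / t + 1/2 * ((1/t) * ln (1 - t) + ln t * (- 1 / (1 - t))))) (at t)"
    using li2_deriv_series[of t] li2_deriv_val[OF assms] assms
    apply (auto intro!: derivative_eq_intros)
    by (simp add: mult.commute)
  moreover have "(- ln (1 - t) / t + 1/2 * ((1/t) * ln (1 - t) + ln t * (- 1 / (1 - t)))) = Ld t"
    unfolding Ld_def using assms by (simp add: field_simps)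
  ultimately show "((\<lambda>t. Li2 t + 1/2 * ln t * ln (1 - t)) has_real_derivative Ld t) (at t)" by simp
  show "\<And>x. x \<in> {0<..<1} \<Longrightarrow> Li2 x + 1 / 2 * ln x * ln (1 - x) = rogers_L x"
    unfolding rogers_L_def by auto
qed (use assms in auto)

lemma L_isCont: "0 < t \<Longrightarrow> t < 1 \<Longrightarrow> isCont rogers_L t"
  using L_deriv DERIV_isCont by blast

lemma L_0: "rogers_L 0 = 0"
  unfolding rogers_L_def by (simp add: li2_0)

lemma L_at_right_0: "(rogers_L \<longlongrightarrow> 0) (at_right 0)"
proof -
  have "isCont Li2 0" using li2_deriv_series[of 0] DERIV_isCont by auto
  then have "(Li2 \<longlongrightarrow> 0) (at_right 0)"
    by (metis isCont_def li2_0 filterlim_at_split)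
  moreover have "((\<lambda>x::real. ln x * ln (1-x)) \<longlongrightarrow> 0) (at_right 0)" by real_asymp
  ultimately have "((\<lambda>x. Li2 x + 1/2 * (ln x * ln (1-x))) \<longlongrightarrow> 0 + 1/2 * 0) (at_right 0)"
    by (intro tendsto_intros)
  then have "((\<lambda>x. Li2 x + 1/2 * (ln x * ln (1-x))) \<longlongrightarrow> 0) (at_right 0)" by simp
  then show ?thesis
  proof (rule Lim_transform_eventually)
    show "\<forall>\<^sub>F x in at_right 0. Li2 x + 1 / 2 * (ln x * ln (1 - x)) = rogers_L x"
      using eventually_at_right_real[OF zero_less_one] by eventually_elim (auto simp: rogers_L_def)
  qed
qed

lemma L_tendsto0:
  assumes "(g \<longlongrightarrow> 0) F" "eventually (\<lambda>x. g x > 0) F"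
  shows "((\<lambda>x. rogers_L (g x)) \<longlongrightarrow> 0) F"
  using filterlim_compose[OF L_at_right_0 tendsto_imp_filterlim_at_right[OF assms]] .
lemma mult_lt1: "0 < x \<Longrightarrow> x < 1 \<Longrightarrow> 0 < y \<Longrightarrow> y < (1::real) \<Longrightarrow> x*y < 1"
proof -
  assume a: "0 < x" "x < 1" "0 < y" "y < 1"
  have "x*y \<le> x*1" by (rule mult_left_mono) (use a in auto)
  then show ?thesis using a by linarith
qed

lemma five_alg:
  fixes x y :: real
  assumes x: "0 < x" "x < 1" and y: "0 < y" "y < 1"
  shows "Ld x - y * Ld (x*y) - (1-y)/(1-x*y)^2 * Ld (x*(1-y)/(1-x*y))
         - (-y*(1-y)/(1-x*y)^2) * Ld (y*(1-x)/(1-x*y)) = 0"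
proof -
  have xy: "0 < x*y" "x*y < 1" using x y mult_lt1[of x y] by auto
  define uu vv ss where "uu = 1-x" and "vv = 1-y" and "ss = 1-x*y"
  have pos: "0 < uu" "0 < vv" "0 < ss" using x y xy by (auto simp: uu_def vv_def ss_def)
  then have nz: "x \<noteq> 0" "y \<noteq> 0" "uu \<noteq> 0" "vv \<noteq> 0" "ss \<noteq> 0" using x y by auto
  have e1: "1 - x * vv/ss = uu/ss" using nz by (simp add: field_simps uu_def vv_def ss_def algebra_simps)
  have e2: "1 - y * uu/ss = vv/ss" using nz by (simp add: field_simps uu_def vv_def ss_def algebra_simps)
  have e0: "1 - x*y = ss" "1 - x = uu" by (simp_all add: ss_def uu_def)
  have l1: "ln (x*y) = ln x + ln y" using x y by (simp add: ln_mult)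
  have l2: "ln (uu/ss) = ln uu - ln ss" using pos by (simp add: ln_div)
  have l3: "ln (vv/ss) = ln vv - ln ss" using pos by (simp add: ln_div)
  have l4: "ln (x * vv/ss) = ln x + ln vv - ln ss" using x pos by (simp add: ln_div ln_mult)
  have l5: "ln (y * uu/ss) = ln y + ln uu - ln ss" using y pos by (simp add: ln_div ln_mult)
  have hx: "Ld x = -(ln uu/x + ln x/uu)/2" unfolding Ld_def e0 by simp
  have hxy: "y * Ld (x*y) = -(ln ss/x + y*(ln x + ln y)/ss)/2"
    unfolding Ld_def e0 l1 using nz by (simp add: field_simps)
  have hX: "vv/ss^2 * Ld (x * vv/ss) = -((ln uu - ln ss)/(x * ss) + (ln x + ln vv - ln ss) * vv/(uu * ss))/2"
    unfolding Ld_def e1 l2 l4 using nz by (simp add: field_simps power2_eq_square)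
  have hY: "(-y * vv/ss^2) * Ld (y * uu/ss) = ((ln vv - ln ss) * vv/(uu * ss) + (ln y + ln uu - ln ss)*y/ss)/2"
    unfolding Ld_def e2 l3 l5 using nz by (simp add: field_simps power2_eq_square)
  have core: "-(c/x + a/uu)/2 + (e/x + y*(a+b)/ss)/2 + ((c-e)/(x * ss) + (a+d-e) * vv/(uu * ss))/2
     - ((d-e) * vv/(uu * ss) + (b+c-e)*y/ss)/2 = 0" for a b c d e :: real
  proof -
    have "-(c/x + a/uu)/2 + (e/x + y*(a+b)/ss)/2 + ((c-e)/(x * ss) + (a+d-e) * vv/(uu * ss))/2
     - ((d-e) * vv/(uu * ss) + (b+c-e)*y/ss)/2 = 
      (c * uu * (1 - ss - x*y) + a * x * (vv + y * uu - ss) + e * uu * (ss - 1 + x*y)) / (2*x * uu * ss)"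
      using nz by (simp add: divide_simps) (simp add: algebra_simps)
    also have "\<dots> = 0" by (simp add: uu_def vv_def ss_def algebra_simps)
    finally show ?thesis .
  qed
  have "Ld x - y * Ld (x*y) - vv/ss^2 * Ld (x * vv/ss) - (-y * vv/ss^2) * Ld (y * uu/ss) = 0"
    unfolding hx hxy hX hY using core[where a="ln x" and b="ln y" and c="ln uu" and d="ln vv" and e="ln ss"] by linarith
  then show ?thesis by (simp add: uu_def vv_def ss_def)
qed

lemma five_term:
  fixes x y :: real
  assumes x: "0 < x" "x < 1" and y: "0 < y" "y < 1"
  shows "rogers_L (x*y) = rogers_L x + rogers_L y
           - rogers_L (x*(1-y)/(1-x*y)) - rogers_L (y*(1-x)/(1-x*y))"
proof -
  define F where "F x = rogers_L x + rogers_L y - rogers_L (x*y)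
           - rogers_L (x*(1-y)/(1-x*y)) - rogers_L (y*(1-x)/(1-x*y))" for x
  have D: "(F has_real_derivative 0) (at x within {0<..<1})" if x: "0 < x" "x < 1" for x
  proof -
    have xy: "0 < x*y" "x*y < 1" using x y mult_lt1[of x y] by auto
    have d: "0 < 1 - x*y" using xy by simp
    have X: "0 < x*(1-y)/(1-x*y)" "x*(1-y)/(1-x*y) < 1" using x y d by (auto simp: field_simps)
    have Y: "0 < y*(1-x)/(1-x*y)" "y*(1-x)/(1-x*y) < 1" using x y d by (auto simp: field_simps)
    have dX: "((\<lambda>x. x*(1-y)/(1-x*y)) has_real_derivative ((1-y)/(1-x*y)^2)) (at x)"
      using d by (auto intro!: derivative_eq_intros simp: field_simps power2_eq_square)
    have dY: "((\<lambda>x. y*(1-x)/(1-x*y)) has_real_derivative (-y*(1-y)/(1-x*y)^2)) (at x)"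
      using d by (auto intro!: derivative_eq_intros simp: field_simps power2_eq_square)
    have dxy: "((\<lambda>x. x*y) has_real_derivative y) (at x)"
      by (auto intro!: derivative_eq_intros)
    have "(F has_real_derivative (Ld x + 0 - Ld (x*y) * y - Ld (x*(1-y)/(1-x*y)) * ((1-y)/(1-x*y)^2)
           - Ld (y*(1-x)/(1-x*y)) * (-y*(1-y)/(1-x*y)^2))) (at x)"
      unfolding F_def
      by (intro DERIV_diff DERIV_add L_deriv DERIV_const x xy X Y
          DERIV_chain2[OF L_deriv dxy] DERIV_chain2[OF L_deriv dX] DERIV_chain2[OF L_deriv dY])
    also have "(Ld x + 0 - Ld (x*y) * y - Ld (x*(1-y)/(1-x*y)) * ((1-y)/(1-x*y)^2)
           - Ld (y*(1-x)/(1-x*y)) * (-y*(1-y)/(1-x*y)^2)) = 0"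
      using five_alg[OF x y] by (simp add: algebra_simps)
    finally show ?thesis by (rule has_field_derivative_at_within)
  qed
  obtain c where c: "\<forall>x\<in>{0<..<1}. F x = c"
    using has_field_derivative_zero_constant[of "{0<..<1::real}" F] D by auto
  have "(F \<longlongrightarrow> 0 + rogers_L y - 0 - 0 - rogers_L (y*(1-0)/(1-0*y))) (at_right 0)"
    unfolding F_def
  proof (intro tendsto_diff tendsto_add tendsto_const)
    have ev: "eventually (\<lambda>x. 0 < x \<and> x < 1) (at_right (0::real))"
      using eventually_at_right_real[OF zero_less_one] by (rule eventually_mono) auto
    show "(rogers_L \<longlongrightarrow> 0) (at_right 0)" by (rule L_at_right_0)
    show "((\<lambda>x. rogers_L (x*y)) \<longlongrightarrow> 0) (at_right 0)"
    proof (rule L_tendsto0)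
      have "((\<lambda>x. x*y) \<longlongrightarrow> 0*y) (at_right 0)" by (intro tendsto_intros)
      then show "((\<lambda>x. x*y) \<longlongrightarrow> 0) (at_right 0)" by simp
      show "eventually (\<lambda>x. x*y > 0) (at_right 0)" using ev by (rule eventually_mono) (use y in auto)
    qed
    show "((\<lambda>x. rogers_L (x*(1-y)/(1-x*y))) \<longlongrightarrow> 0) (at_right 0)"
    proof (rule L_tendsto0)
      have "((\<lambda>x. x*(1-y)/(1-x*y)) \<longlongrightarrow> 0*(1-y)/(1-0*y)) (at_right 0)" by (intro tendsto_intros) simp
      then show "((\<lambda>x. x*(1-y)/(1-x*y)) \<longlongrightarrow> 0) (at_right 0)" by simp
      show "eventually (\<lambda>x. x*(1-y)/(1-x*y) > 0) (at_right 0)" using ev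
      proof (rule eventually_mono)
        fix x :: real assume "0 < x \<and> x < 1"
        then have "x*y < 1" using y mult_lt1[of x y] by auto
        then show "x*(1-y)/(1-x*y) > 0" using \<open>0 < x \<and> x < 1\<close> y by simp
      qed
    qed
    have "((\<lambda>x. y*(1-x)/(1-x*y)) \<longlongrightarrow> y*(1-0)/(1-0*y)) (at_right 0)" by (intro tendsto_intros) simp
    moreover have "isCont rogers_L (y*(1-0)/(1-0*y))" using L_isCont y by simp
    ultimately show "((\<lambda>x. rogers_L (y*(1-x)/(1-x*y))) \<longlongrightarrow> rogers_L (y*(1-0)/(1-0*y))) (at_right 0)"
      using isCont_tendsto_compose by blast
  qed
  then have "(F \<longlongrightarrow> 0) (at_right 0)" by simp
  moreover have "(F \<longlongrightarrow> c) (at_right 0)"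
  proof (rule Lim_transform_eventually[OF tendsto_const])
    show "eventually (\<lambda>x. c = F x) (at_right 0)"
      using eventually_at_right_real[OF zero_less_one] by (rule eventually_mono) (use c in auto)
  qed
  ultimately have "c = 0" using tendsto_unique[of "at_right (0::real)"] by auto
  with c x have "F x = 0" by auto
  then show ?thesis unfolding F_def by simp
qed

lemma reflection:
  fixes x y :: real
  assumes "0 < x" "x < 1" "0 < y" "y < 1"
  shows "rogers_L x + rogers_L (1-x) = rogers_L y + rogers_L (1-y)"
proof -
  define G where "G x = rogers_L x + rogers_L (1-x)" for x
  have D: "(G has_real_derivative 0) (at x within {0<..<1})" if x: "0 < x" "x < 1" for x
  proof -
    have d1: "((\<lambda>x. 1 - x) has_real_derivative -1) (at x)" by (auto intro!: derivative_eq_intros)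
    have "(G has_real_derivative (Ld x + Ld (1-x) * (-1))) (at x)"
      unfolding G_def using x by (intro DERIV_add L_deriv DERIV_chain2[OF L_deriv d1]) auto
    also have "Ld x + Ld (1-x) * (-1) = 0" unfolding Ld_def by simp
    finally show ?thesis by (rule has_field_derivative_at_within)
  qed
  obtain c where c: "\<forall>x\<in>{0<..<1}. G x = c"
    using has_field_derivative_zero_constant[of "{0<..<1::real}" G] D by auto
  then show ?thesis using assms unfolding G_def by auto
qed
definition xs :: "real \<Rightarrow> nat \<Rightarrow> real" where
  "xs q m = q^m * (q-1) / (q * (q^m - 1))"
definition ys :: "real \<Rightarrow> nat \<Rightarrow> real" where
  "ys q m = (q-1) / (q^m - 1)"
definition gg :: "real \<Rightarrow> nat \<Rightarrow> real" where
  "gg q m = rogers_L (xs q m) + rogers_L (ys q m)"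
definition TT :: "real \<Rightarrow> nat \<Rightarrow> real" where
  "TT q m = q^m * (q-1)^2 / (q * (q^m - 1)^2)"

lemma qpow_gt: assumes "q > (1::real)" "m \<ge> 2" shows "q^m > q"
proof -
  have "q^1 < q^m" using assms by (intro power_strict_increasing) auto
  then show ?thesis by simp
qed

lemma step:
  assumes q: "q > (1::real)" and m: "m \<ge> 2"
  shows "rogers_L (TT q m) = gg q m - gg q (Suc m)"
proof -
  define Q where "Q = q^m"
  have Qq: "Q > q" using qpow_gt[OF q m] by (simp add: Q_def)
  have Q1: "Q > 1" using Qq q by simp
  have qQ: "q * Q > 1" using q Q1 by (metis less_1_mult)
  have s: "q^(Suc m) = q * Q" by (simp add: Q_def)
  have x: "0 < xs q m" "xs q m < 1" using q Qq Q1 unfolding xs_def Q_def[symmetric]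
    by (auto simp: field_simps)
  have y: "0 < ys q m" "ys q m < 1" using q Qq Q1 unfolding ys_def Q_def[symmetric]
    by (auto simp: field_simps)
  define a1 a2 a3 where "a1 = Q - 1" and "a2 = q*Q - 1" and "a3 = Q - q"
  have nz: "q \<noteq> 0" "a1 \<noteq> 0" "a2 \<noteq> 0" "a3 \<noteq> 0" using q Q1 Qq qQ by (auto simp: a1_def a2_def a3_def)
  have X: "xs q m = Q*(q-1)/(q*a1)" unfolding xs_def Q_def a1_def ..
  have Y: "ys q m = (q-1)/a1" unfolding ys_def Q_def a1_def ..
  have X': "xs q (Suc m) = Q*(q-1)/a2" unfolding xs_def s a2_def using nz(1) by simp
  have Y': "ys q (Suc m) = (q-1)/a2" unfolding ys_def s a2_def ..
  have oY: "1 - ys q m = a3/a1" unfolding Y using nz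
    by (simp add: divide_simps) (simp add: a1_def a3_def)
  have oX: "1 - xs q m = a3/(q*a1)" unfolding X using nz
    by (simp add: divide_simps) (simp add: a1_def a3_def algebra_simps)
  have d: "1 - xs q m * ys q m = a3*a2/(q*a1^2)" unfolding X Y using nz
    by (simp add: divide_simps) (simp add: a1_def a2_def a3_def algebra_simps power2_eq_square)
  have e1: "xs q m * ys q m = TT q m"
    unfolding X Y TT_def Q_def[symmetric] a1_def[symmetric] using nz by (simp add: field_simps power2_eq_square)
  have e2: "xs q m * (1 - ys q m) / (1 - xs q m * ys q m) = xs q (Suc m)"
    unfolding d oY X' unfolding X using nz by (simp add: field_simps power2_eq_square)
  have e3: "ys q m * (1 - xs q m) / (1 - xs q m * ys q m) = ys q (Suc m)"
    unfolding d oX Y' unfolding Y using nz by (simp add: field_simps power2_eq_square)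
  show ?thesis
    using five_term[OF x y] unfolding e2 e3 unfolding e1 gg_def by simp
qed

lemma gg_lim:
  assumes q: "q > (1::real)"
  shows "gg q \<longlonglongrightarrow> rogers_L ((q-1)/q)"
proof -
  have r: "(\<lambda>m. (1/q)^m) \<longlonglongrightarrow> 0" using q by (intro LIMSEQ_power_zero) simp
  have ev: "eventually (\<lambda>m. m \<ge> 1) sequentially" by (rule eventually_ge_at_top)
  have xs_eq: "xs q m = (q-1) / (q * (1 - (1/q)^m))" if "m \<ge> 1" for m
  proof -
    have "q^m > 1" using q that by (simp add: one_less_power)
    then show ?thesis unfolding xs_def using q by (simp add: field_simps power_one_over)
  qed
  have ys_eq: "ys q m = (q-1) * (1/q)^m / (1 - (1/q)^m)" if "m \<ge> 1" for m
  proof -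
    have "q^m > 1" using q that by (simp add: one_less_power)
    then show ?thesis unfolding ys_def using q by (simp add: field_simps power_one_over)
  qed
  have "(\<lambda>m. (q-1) / (q * (1 - (1/q)^m))) \<longlonglongrightarrow> (q-1) / (q * (1 - 0))"
    using q by (intro tendsto_intros r) auto
  then have "(\<lambda>m. (q-1) / (q * (1 - (1/q)^m))) \<longlonglongrightarrow> (q-1)/q" by simp
  then have "(xs q) \<longlonglongrightarrow> (q-1)/q"
    by (rule Lim_transform_eventually) (rule eventually_mono[OF ev], metis xs_eq)
  moreover have "isCont rogers_L ((q-1)/q)" using q by (intro L_isCont) auto
  ultimately have A: "(\<lambda>m. rogers_L (xs q m)) \<longlonglongrightarrow> rogers_L ((q-1)/q)"
    using isCont_tendsto_compose by blast
  have "(\<lambda>m. (q-1) * (1/q)^m / (1 - (1/q)^m)) \<longlonglongrightarrow> (q-1) * 0 / (1 - 0)"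
    by (intro tendsto_intros r) auto
  then have "(\<lambda>m. (q-1) * (1/q)^m / (1 - (1/q)^m)) \<longlonglongrightarrow> 0" by simp
  then have ylim: "(ys q) \<longlonglongrightarrow> 0"
    by (rule Lim_transform_eventually) (rule eventually_mono[OF ev], metis ys_eq)
  have "eventually (\<lambda>m. ys q m > 0) sequentially"
    using ev
  proof (rule eventually_mono)
    fix m :: nat assume "m \<ge> 1"
    then have "q^m > 1" using q by (simp add: one_less_power)
    then show "ys q m > 0" unfolding ys_def using q by simp
  qed
  then have B: "(\<lambda>m. rogers_L (ys q m)) \<longlonglongrightarrow> 0"
    using L_tendsto0[OF ylim] by simp
  show ?thesis unfolding gg_def[abs_def] using tendsto_add[OF A B] by simp
qed

lemma main_real:
  assumes q: "q > (1::real)"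
  shows "(\<lambda>j. rogers_L (TT q (2*j+2)) + rogers_L (TT q (2*j+3))) sums rogers_L (1/q)"
proof -
  define h where "h j = gg q (2*j+2)" for j
  have "strict_mono (\<lambda>j::nat. 2*j+2)" by (rule strict_monoI) simp
  then have "h \<longlonglongrightarrow> rogers_L ((q-1)/q)"
    using LIMSEQ_subseq_LIMSEQ[OF gg_lim[OF q]] unfolding h_def o_def by simp
  then have "(\<lambda>j. h j - h (Suc j)) sums (h 0 - rogers_L ((q-1)/q))"
    by (rule telescope_sums')
  moreover have "h j - h (Suc j) = rogers_L (TT q (2*j+2)) + rogers_L (TT q (2*j+3))" for j
    using step[OF q, of "2*j+2"] step[OF q, of "2*j+3"] unfolding h_def
    by (simp add: numeral_eq_Suc)
  moreover have "h 0 - rogers_L ((q-1)/q) = rogers_L (1/q)"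
  proof -
    have f: "q^2 - 1 = (q-1)*(q+1)" by (simp add: algebra_simps power2_eq_square)
    have nz: "q \<noteq> 0" "q - 1 \<noteq> 0" "q + 1 \<noteq> 0" using q by auto
    have "q*q > 1" using q by (metis less_1_mult)
    then have nz2: "q*q \<noteq> 1" by simp
    have x2: "xs q 2 = 1 - 1/(q+1)" unfolding xs_def f using nz
      using nz2 by (simp add: divide_simps) (simp add: algebra_simps power2_eq_square)
    have y2: "ys q 2 = 1/(q+1)" unfolding ys_def f using nz nz2
      by (simp add: field_simps)
    have "rogers_L (1/(q+1)) + rogers_L (1 - 1/(q+1)) = rogers_L (1/q) + rogers_L (1 - 1/q)"
      using q by (intro reflection) (auto simp: field_simps)
    moreover have "1 - 1/q = (q-1)/q" using q by (simp add: field_simps)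
    moreover have "h 0 = gg q 2" by (simp add: h_def numeral_2_eq_2)
    ultimately show ?thesis unfolding gg_def x2 y2 by simp
  qed
  ultimately show ?thesis by simp
qed
lemma sqrt_irrat:
  assumes "\<not> (\<exists>m::nat. m^2 = n)"
  shows "sqrt (real n) \<notin> \<rat>"
proof
  assume "sqrt (real n) \<in> \<rat>"
  then obtain p r :: int where r: "r > 0" "coprime p r" "sqrt (real n) = of_int p / of_int r"
    by (rule Rats_cases')
  have "real n = (sqrt (real n))^2" by simp
  also have "\<dots> = (of_int p)^2 / (of_int r)^2" unfolding r(3) by (simp add: power_divide)
  finally have "real n * (of_int r)^2 = (of_int p)^2" using r(1) by (simp add: field_simps)
  then have "of_int (int n * r^2) = (of_int (p^2) :: real)" by simp
  then have eq: "int n * r^2 = p^2" by (simp only: of_int_eq_iff)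
  then have "r^2 dvd p^2" by (metis dvd_triv_right)
  moreover have "coprime (r^2) (p^2)" using r(2) by (simp add: coprime_commute)
  ultimately have "is_unit (r^2)" using coprime_absorb_left by blast
  then have "r^2 dvd 1" by simp
  then have "r^2 \<le> 1" by (simp add: zdvd_imp_le)
  then have h1: "r * r \<le> 1" by (simp add: power2_eq_square)
  have "r * 1 \<le> r * r" by (rule mult_left_mono) (use r(1) in auto)
  then have h2: "r \<le> r * r" by simp
  have "r = 1" using r(1) h1 h2 by linarith
  then have "int n = p^2" using eq by simp
  then have "int ((nat \<bar>p\<bar>)^2) = int n" by simp
  then have "(nat \<bar>p\<bar>)^2 = n" by (simp only: of_nat_eq_iff)
  with assms show False by blast
qed

fun pq :: "'a::comm_ring_1 \<Rightarrow> 'a \<Rightarrow> 'a \<Rightarrow> nat \<Rightarrow> 'a \<times> 'a" where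
  "pq a b N 0 = (1, 0)"
| "pq a b N (Suc k) = (a * fst (pq a b N k) + N * b * snd (pq a b N k),
                       a * snd (pq a b N k) + b * fst (pq a b N k))"

lemma pq_of_int:
  "pq (of_int a :: rat) (of_int b) (of_int N) k = (of_int (fst (pq a b N k)), of_int (snd (pq a b N k)))"
  by (induction k) auto

lemma pq_dvd:
  fixes a b N :: int
  shows "a dvd snd (pq a b N (2*k)) \<and> a dvd fst (pq a b N (2*k+1))"
proof (induction k)
  case 0 then show ?case by simp
next
  case (Suc k)
  have e1: "2 * Suc k = Suc (2*k+1)" by simp
  have e2: "2 * Suc k + 1 = Suc (Suc (2*k+1))" by simp
  have A: "a dvd snd (pq a b N (2 * Suc k))"
    unfolding e1 using Suc by simp
  have "a dvd fst (pq a b N (2 * Suc k + 1))"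
    unfolding e2 pq.simps(2)[of a b N "Suc (2*k+1)"] using A unfolding e1 by simp
  with A show ?case by blast
qed

lemma pq_real:
  fixes a b :: rat and s :: real
  assumes ss: "s * s = real n"
  shows "(of_rat a + of_rat b * s)^k = of_rat (fst (pq a b (of_nat n) k)) + of_rat (snd (pq a b (of_nat n) k)) * s
       \<and> (of_rat a - of_rat b * s)^k = of_rat (fst (pq a b (of_nat n) k)) - of_rat (snd (pq a b (of_nat n) k)) * s"
proof (induction k)
  case 0 then show ?case by simp
next
  case (Suc k)
  define P where "P = fst (pq a b (of_nat n) k)"
  define Q where "Q = snd (pq a b (of_nat n) k)"
  have IH: "(of_rat a + of_rat b * s)^k = of_rat P + of_rat Q * s"
           "(of_rat a - of_rat b * s)^k = of_rat P - of_rat Q * s"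
    using Suc unfolding P_def Q_def by auto
  have "(of_rat a + of_rat b * s) * (of_rat P + of_rat Q * s)
        = of_rat a * of_rat P + of_rat b * of_rat Q * (s * s) + (of_rat a * of_rat Q + of_rat b * of_rat P) * s"
    by (simp add: algebra_simps)
  moreover have "(of_rat a - of_rat b * s) * (of_rat P - of_rat Q * s)
        = of_rat a * of_rat P + of_rat b * of_rat Q * (s * s) - (of_rat a * of_rat Q + of_rat b * of_rat P) * s"
    by (simp add: algebra_simps)
  ultimately show ?case
    unfolding power_Suc pq.simps P_def[symmetric] Q_def[symmetric] IH ss
    by (simp add: of_rat_add of_rat_mult algebra_simps)
qed

lemma TT_form:
  fixes u :: real
  assumes u: "u > 1" and m: "m \<ge> 1"
  shows "(u - 1/u)^2 / (u^m - 1/u^m)^2 = TT (u^2) m"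
proof -
  define c where "c = u^m"
  have c: "c > 1" unfolding c_def using u m by (simp add: one_less_power)
  have cc: "c*c > 1" using c by (metis less_1_mult)
  have uu: "u*u > 1" using u by (metis less_1_mult)
  have e1: "u - 1/u = (u*u - 1)/u" using u by (simp add: field_simps)
  have e2: "c - 1/c = (c*c - 1)/c" using c by (simp add: field_simps)
  have e3: "(u^2)^m = c*c" unfolding c_def by (simp add: power_mult_distrib power2_eq_square)
  have nz: "u \<noteq> 0" "c \<noteq> 0" "c*c - 1 \<noteq> 0" "u*u - 1 \<noteq> 0" using u c cc uu by auto
  have "(u - 1/u)^2 / (c - 1/c)^2 = c^2 * (u*u-1)^2 / (u^2 * (c*c - 1)^2)"
    unfolding e1 e2 using nz by (simp add: power_divide field_simps)
  also have "\<dots> = TT (u^2) m"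
    unfolding TT_def e3 by (simp add: power2_eq_square)
  finally show ?thesis unfolding c_def .
qed
lemma half_cancel: "(x/2)/(y/2) = x/(y::real)"
  by (cases "y = 0") (simp_all add: field_simps)

theorem theorem3:
  fixes n :: nat and a b :: rat and A B :: "nat \<Rightarrow> rat"
  assumes "n \<ge> 2"
    and "\<not> (\<exists>m::nat. m^2 = n)"
    and "a > 0" and "b > 0"
    and "a^2 - of_nat n * b^2 = -1"
    and "\<And>k. k \<ge> 1 \<Longrightarrow>
           (of_rat a + of_rat b * sqrt (real n)) ^ k
             = of_rat (A k) + of_rat (B k) * sqrt (real n)"
  shows "((\<lambda>j. let k = Suc j in
            rogers_L (1 / (real n * (of_rat (B (2*k) / a))^2))
          + rogers_L (1 / (of_rat (A (2*k+1) / a))^2))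
         sums rogers_L (1 / (of_rat a + of_rat b * sqrt (real n))^2))
         \<and> ((a \<in> \<int> \<and> b \<in> \<int>) \<longrightarrow>
           (\<forall>k\<ge>1. B (2*k) / a \<in> \<int> \<and> A (2*k+1) / a \<in> \<int>))"
proof -
  define s where "s = sqrt (real n)"
  have ss: "s * s = real n" unfolding s_def by simp
  have s0: "s \<ge> 0" unfolding s_def by simp
  have sirr: "s \<notin> \<rat>" using sqrt_irrat[OF assms(2)] unfolding s_def .
  define P where "P k = fst (pq a b (of_nat n) k)" for k
  define Q where "Q k = snd (pq a b (of_nat n) k)" for k
  have uP: "(of_rat a + of_rat b * s)^k = of_rat (P k) + of_rat (Q k) * s" for k
    using pq_real[OF ss, of a b k] unfolding P_def Q_def by blast
  have wP: "(of_rat a - of_rat b * s)^k = of_rat (P k) - of_rat (Q k) * s" for k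
    using pq_real[OF ss, of a b k] unfolding P_def Q_def by blast
  have AB: "A k = P k \<and> B k = Q k" if k: "k \<ge> 1" for k
  proof -
    have e: "of_rat (A k) + of_rat (B k) * s = of_rat (P k) + of_rat (Q k) * s"
      using assms(6)[OF k] uP[of k] unfolding s_def by simp
    have "B k = Q k"
    proof (rule ccontr)
      assume ne: "B k \<noteq> Q k"
      have "(of_rat (B k) - of_rat (Q k)) * s = of_rat (P k) - of_rat (A k)"
        using e by (simp add: algebra_simps)
      then have "of_rat (B k - Q k) * s = of_rat (P k - A k)" by (simp add: of_rat_diff)
      moreover have "of_rat (B k - Q k) \<noteq> (0::real)" using ne by simp
      ultimately have "s = of_rat ((P k - A k) / (B k - Q k))"
        by (simp add: of_rat_divide field_simps)
      then have "s \<in> \<rat>" by simp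
      with sirr show False by simp
    qed
    moreover then have "A k = P k" using e by simp
    ultimately show ?thesis by simp
  qed
  have part2: "(a \<in> \<int> \<and> b \<in> \<int>) \<longrightarrow> (\<forall>k\<ge>1. B (2*k) / a \<in> \<int> \<and> A (2*k+1) / a \<in> \<int>)"
  proof (intro impI allI)
    fix k :: nat assume ab: "a \<in> \<int> \<and> b \<in> \<int>" and k: "k \<ge> 1"
    obtain a' where a': "a = of_int a'" using ab Ints_cases by blast
    obtain b' where b': "b = of_int b'" using ab Ints_cases by blast
    have a'0: "a' \<noteq> 0" using assms(3) a' by auto
    have N: "(of_nat n :: rat) = of_int (int n)" by simp
    have pqi: "pq a b (of_nat n) m = (of_int (fst (pq a' b' (int n) m)), of_int (snd (pq a' b' (int n) m)))" for m
      unfolding a' b' N by (rule pq_of_int)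
    note dd = pq_dvd[of a' b' "int n" k]
    obtain c where c: "snd (pq a' b' (int n) (2*k)) = a' * c" using conjunct1[OF dd] by (rule dvdE)
    obtain d where d: "fst (pq a' b' (int n) (2*k+1)) = a' * d" using conjunct2[OF dd] by (rule dvdE)
    note cd = c d
    have Qe: "Q (2*k) = of_int (a' * c)" unfolding Q_def pqi c by simp
    have Pe: "P (2*k+1) = of_int (a' * d)" unfolding P_def pqi d by simp
    have "B (2*k) / a = of_int c"
      using AB[of "2*k"] k a'0 unfolding Qe a' by simp
    moreover have "A (2*k+1) / a = of_int d"
      using AB[of "2*k+1"] a'0 unfolding Pe a' by simp
    ultimately show "B (2*k) / a \<in> \<int> \<and> A (2*k+1) / a \<in> \<int>" by simp
  qed
  define u where "u = of_rat a + of_rat b * s"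
  define w where "w = of_rat a - of_rat b * s"
  have ar: "(of_rat a :: real) > 0" "(of_rat b :: real) > 0" using assms(3,4) by auto
  have "of_rat (a^2 - of_nat n * b^2) = (-1::real)" using assms(5) by simp
  then have "(of_rat a)^2 - real n * (of_rat b)^2 = (-1::real)" by (simp add: of_rat_diff of_rat_mult of_rat_power)
  then have uw: "u * w = -1" unfolding u_def w_def
    by (simp add: algebra_simps power2_eq_square ss[symmetric])
  have u0: "u > 0" unfolding u_def using ar s0 by (simp add: add_pos_nonneg)
  have wu: "w = -1/u" using uw u0 by (simp add: field_simps)
  have apw: "u + w = 2 * of_rat a" unfolding u_def w_def by simp
  have u1: "u > 1"
  proof -
    have "u - 1/u > 0" using apw wu ar by simp
    then have "u * u > 1" using u0 by (simp add: field_simps)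
    then show ?thesis using u0 by (metis less_1_mult mult_le_one not_le order.strict_implies_order) 
  qed
  have alpha: "(of_rat a :: real) = (u - 1/u)/2" using apw wu by simp
  have Qs: "of_rat (Q k) * s = (u^k - w^k)/2" for k
    using uP[of k] wP[of k] unfolding u_def[symmetric] w_def[symmetric] by simp
  have Pk: "of_rat (P k) = (u^k + w^k)/2" for k
    using uP[of k] wP[of k] unfolding u_def[symmetric] w_def[symmetric] by simp
  have wk: "w^k = (-1)^k / u^k" for k unfolding wu by (rule power_divide)
  have T1: "1 / (real n * (of_rat (B m / a))^2) = TT (u^2) m" if m: "m \<ge> 1" "even m" for m
  proof -
    have "real n * (of_rat (B m / a))^2 = (of_rat (Q m) * s)^2 / (of_rat a)^2"
      using AB[OF m(1)] by (simp add: of_rat_divide power_divide power_mult_distrib ss[symmetric] power2_eq_square)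
    also have "\<dots> = ((u^m - 1/u^m)/2)^2 / ((u - 1/u)/2)^2"
      unfolding Qs alpha wk using m(2) by simp
    finally have "1 / (real n * (of_rat (B m / a))^2) = (u - 1/u)^2 / (u^m - 1/u^m)^2"
      by (simp add: power_divide)
    then show ?thesis using TT_form[OF u1 m(1)] by simp
  qed
  have T2: "1 / (of_rat (A m / a))^2 = TT (u^2) m" if m: "m \<ge> 1" "odd m" for m
  proof -
    have "of_rat (A m / a) = of_rat (P m) / (of_rat a :: real)"
      using AB[OF m(1)] by (simp add: of_rat_divide)
    also have "\<dots> = ((u^m + (-1)^m/u^m)/2) / ((u - 1/u)/2)"
      unfolding Pk alpha wk ..
    also have "\<dots> = ((u^m - 1/u^m)/2) / ((u - 1/u)/2)"
      using m(2) by simp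
    also have "\<dots> = (u^m - 1/u^m) / (u - 1/u)" by (rule half_cancel)
    finally have "of_rat (A m / a) = (u^m - 1/u^m) / (u - 1/u)" .
    then have "1 / (of_rat (A m / a))^2 = (u - 1/u)^2 / (u^m - 1/u^m)^2"
      by (simp add: power_divide)
    then show ?thesis using TT_form[OF u1 m(1)] by simp
  qed
  have fun_eq: "(\<lambda>j. let k = Suc j in
            rogers_L (1 / (real n * (of_rat (B (2*k) / a))^2))
          + rogers_L (1 / (of_rat (A (2*k+1) / a))^2))
       = (\<lambda>j. rogers_L (TT (u^2) (2*j+2)) + rogers_L (TT (u^2) (2*j+3)))"
  proof
    fix j :: nat
    have "1 / (real n * (of_rat (B (2*Suc j) / a))^2) = TT (u^2) (2*j+2)"
      using T1[of "2*Suc j"] by simp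
    moreover have "1 / (of_rat (A (2*Suc j+1) / a))^2 = TT (u^2) (2*j+3)"
      using T2[of "2*Suc j+1"] by (simp add: numeral_3_eq_3)
    ultimately show "(let k = Suc j in
            rogers_L (1 / (real n * (of_rat (B (2*k) / a))^2))
          + rogers_L (1 / (of_rat (A (2*k+1) / a))^2))
       = rogers_L (TT (u^2) (2*j+2)) + rogers_L (TT (u^2) (2*j+3))"
      by (simp add: Let_def)
  qed
  have "u^2 > 1" using u1 by (simp add: one_less_power)
  then have "(\<lambda>j. rogers_L (TT (u^2) (2*j+2)) + rogers_L (TT (u^2) (2*j+3))) sums rogers_L (1/u^2)"
    by (rule main_real)
  then have part1: "((\<lambda>j. let k = Suc j in
            rogers_L (1 / (real n * (of_rat (B (2*k) / a))^2))
          + rogers_L (1 / (of_rat (A (2*k+1) / a))^2))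
         sums rogers_L (1 / (of_rat a + of_rat b * sqrt (real n))^2))"
    unfolding fun_eq u_def s_def .
  from part1 part2 show ?thesis by blast
qed
end
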